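(* Let $\mathfrak A$ be an $L$-structure and $a,b,c,d\in A$. (1) Let $t(x,y)$ be a c-term. If $t^{\mathfrak A}(a,b)=t^{\mathfrak A}(c,d)$ and $t^{\mathfrak A}(a,b)\neq t^{\mathfrak A}(c,d')$ for all $d'\in A$ with $d'\neq d$, then $\mathfrak A\models a\to b:\cdot\, c\to d$. (2) Let $t_a,t_b,t_c,t_d$ be c-terms such that $t_a^{\mathfrak A}(a,b)=t_a^{\mathfrak A}(c,d)$ and $t_a^{\mathfrak A}(a',b)\neq t_a^{\mathfrak A}(c,d)$ for all $a'\neq a$; $t_b^{\mathfrak A}(a,b)=t_b^{\mathfrak A}(c,d)$ and $t_b^{\mathfrak A}(a,b')\neq t_b^{\mathfrak A}(c,d)$ for all $b'\neq b$; $t_c^{\mathfrak A}(a,b)=t_c^{\mathfrak A}(c,d)$ and $t_c^{\mathfrak A}(a,b)\neq t_c^{\mathfrak A}(c',d)$ for all $c'\neq c$; $t_d^{\mathfrak A}(a,b)=t_d^{\mathfrak A}(c,d)$ and $t_d^{\mathfrak A}(a,b)\neq t_d^{\mathfrak A}(c,d')$ for all $d'\neq d$. Then $\mathfrak A\models a:b::c:d$.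
   Context: A c-term is an $L$-term containing both variables $x$ and $y$ (and no others); $t^{\mathfrak A}$ is the induced term function. A c-formula is a conjunctive $L$-formula (built from atomic formulas using only $\wedge,\exists,\forall$) with free variables exactly $x,y$ whose dependency graph (vertices: its variables; edge $\{w,z\}$ iff $w,z$ occur together in an atomic subformula) is connected; elements of $A$ may be used as parameters (e.g. the formula $t(x,y)=t^{\mathfrak A}(a,b)$ counts as a c-formula). $\uparrow_{\mathfrak A}(a\to b)=\{\alpha\text{ c-formula}:\mathfrak A\models\alpha(a,b)\}$; $\uparrow_{\mathfrak A}(a\to b:\cdot\, c\to d)=\uparrow_{\mathfrak A}(a\to b)\cap\uparrow_{\mathfrak A}(c\to d)$. A c-formula is trivial in $\mathfrak A$ iff it lies in $\uparrow_{\mathfrak A}(a\to b:\cdot\, c\to d)$ for all $a,b,c,d\in A$; $\emptyset_{\mathfrak A}$ is the set of these. $\mathfrak A\models a\to b:\cdot\, c\to d$ iff either $\uparrow_{\mathfrak A}(a\to b)\cup\uparrow_{\mathfrak A}(c\to d)$ consists only of trivial formulas, or $\uparrow_{\mathfrak A}(a\to b:\cdot\, c\to d)$ contains a non-trivial formula and for every $d'\in A$, $\emptyset_{\mathfrak A}\subsetneq\uparrow(a\to b:\cdot\, c\to d)\subseteq\uparrow(a\to b:\cdot\, c\to d')$ implies $\emptyset_{\mathfrak A}\subsetneq\uparrow(a\to b:\cdot\, c\to d')\subseteq\uparrow(a\to b:\cdot\, c\to d)$. $\mathfrak A\models a:b::c:d$ iff $\mathfrak A\models a\to b:\cdot\,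 c\to d$, $b\to a:\cdot\, d\to c$, $c\to d:\cdot\, a\to b$ and $d\to c:\cdot\, b\to a$. *)

theory Defs
  imports Main
begin

text \<open>An L-structure has universe the type 'a (nonempty by HOL
  semantics) and interprets symbols. Variables are natural numbers; x = 0, y = 1.
  Terms may contain parameters (elements of A); L-terms proper have none.\<close>

record ('f, 'r) lang =
  fun_ar :: "'f \<Rightarrow> nat"
  rel_ar :: "'r \<Rightarrow> nat"

record ('f, 'r, 'a) struc =
  fun_int :: "'f \<Rightarrow> 'a list \<Rightarrow> 'a"
  rel_int :: "'r \<Rightarrow> 'a list \<Rightarrow> bool"

datatype ('f, 'a) trm = Var nat | Par 'a | Fn 'f "('f, 'a) trm list"

datatype ('f, 'r, 'a) fm =
    Eq "('f, 'a) trm" "('f, 'a) trm"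
  | Rel 'r "('f, 'a) trm list"
  | Conj "('f, 'r, 'a) fm" "('f, 'r, 'a) fm"
  | Ex nat "('f, 'r, 'a) fm"
  | All nat "('f, 'r, 'a) fm"

fun teval :: "('f, 'r, 'a) struc \<Rightarrow> (nat \<Rightarrow> 'a) \<Rightarrow> ('f, 'a) trm \<Rightarrow> 'a" where
  "teval M e (Var v) = e v"
| "teval M e (Par p) = p"
| "teval M e (Fn f ts) = fun_int M f (map (teval M e) ts)"

fun wf_trm :: "('f, 'r) lang \<Rightarrow> ('f, 'a) trm \<Rightarrow> bool" where
  "wf_trm L (Var v) = True"
| "wf_trm L (Par p) = True"
| "wf_trm L (Fn f ts) = (length ts = fun_ar L f \<and> (\<forall>t\<in>set ts. wf_trm L t))"

fun tvars :: "('f, 'a) trm \<Rightarrow> nat set" where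
  "tvars (Var v) = {v}"
| "tvars (Par p) = {}"
| "tvars (Fn f ts) = (\<Union>t\<in>set ts. tvars t)"

fun has_par :: "('f, 'a) trm \<Rightarrow> bool" where
  "has_par (Var v) = False"
| "has_par (Par p) = True"
| "has_par (Fn f ts) = (\<exists>t\<in>set ts. has_par t)"

fun sat :: "('f, 'r, 'a) struc \<Rightarrow> (nat \<Rightarrow> 'a) \<Rightarrow> ('f, 'r, 'a) fm \<Rightarrow> bool" where
  "sat M e (Eq s t) = (teval M e s = teval M e t)"
| "sat M e (Rel r ts) = rel_int M r (map (teval M e) ts)"
| "sat M e (Conj \<phi> \<psi>) = (sat M e \<phi> \<and> sat M e \<psi>)"
| "sat M e (Ex v \<phi>) = (\<exists>z. sat M (e(v := z)) \<phi>)"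
| "sat M e (All v \<phi>) = (\<forall>z. sat M (e(v := z)) \<phi>)"

fun wf_fm :: "('f, 'r) lang \<Rightarrow> ('f, 'r, 'a) fm \<Rightarrow> bool" where
  "wf_fm L (Eq s t) = (wf_trm L s \<and> wf_trm L t)"
| "wf_fm L (Rel r ts) = (length ts = rel_ar L r \<and> (\<forall>t\<in>set ts. wf_trm L t))"
| "wf_fm L (Conj \<phi> \<psi>) = (wf_fm L \<phi> \<and> wf_fm L \<psi>)"
| "wf_fm L (Ex v \<phi>) = wf_fm L \<phi>"
| "wf_fm L (All v \<phi>) = wf_fm L \<phi>"

fun fv :: "('f, 'r, 'a) fm \<Rightarrow> nat set" where
  "fv (Eq s t) = tvars s \<union> tvars t"
| "fv (Rel r ts) = (\<Union>t\<in>set ts. tvars t)"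
| "fv (Conj \<phi> \<psi>) = fv \<phi> \<union> fv \<psi>"
| "fv (Ex v \<phi>) = fv \<phi> - {v}"
| "fv (All v \<phi>) = fv \<phi> - {v}"

fun atom_vars :: "('f, 'r, 'a) fm \<Rightarrow> nat set set" where
  "atom_vars (Eq s t) = {tvars s \<union> tvars t}"
| "atom_vars (Rel r ts) = {\<Union>t\<in>set ts. tvars t}"
| "atom_vars (Conj \<phi> \<psi>) = atom_vars \<phi> \<union> atom_vars \<psi>"
| "atom_vars (Ex v \<phi>) = atom_vars \<phi>"
| "atom_vars (All v \<phi>) = atom_vars \<phi>"

definition dep_vertices :: "('f, 'r, 'a) fm \<Rightarrow> nat set" where
  "dep_vertices \<phi> = \<Union>(atom_vars \<phi>)"

definition dep_edges :: "('f, 'r, 'a) fm \<Rightarrow> (nat \<times> nat) set" where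
  "dep_edges \<phi> = {(w, z). \<exists>S\<in>atom_vars \<phi>. w \<in> S \<and> z \<in> S}"

definition dep_connected :: "('f, 'r, 'a) fm \<Rightarrow> bool" where
  "dep_connected \<phi> =
     (\<forall>u\<in>dep_vertices \<phi>. \<forall>v\<in>dep_vertices \<phi>. (u, v) \<in> (dep_edges \<phi>)\<^sup>*)"

definition vx :: nat where "vx = 0"
definition vy :: nat where "vy = 1"

definition cterm :: "('f, 'r) lang \<Rightarrow> ('f, 'a) trm \<Rightarrow> bool" where
  "cterm L t = (wf_trm L t \<and> \<not> has_par t \<and> tvars t = {vx, vy})"

text \<open>c-formulas: conjunctive formulas (parameters allowed), free variables
  exactly x, y, connected dependency graph.\<close>
definition cformula :: "('f, 'r) lang \<Rightarrow> ('f, 'r, 'a) fm \<Rightarrow> bool" where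
  "cformula L \<phi> = (wf_fm L \<phi> \<and> fv \<phi> = {vx, vy} \<and> dep_connected \<phi>)"

definition asg :: "'a \<Rightarrow> 'a \<Rightarrow> nat \<Rightarrow> 'a" where
  "asg a b = (\<lambda>v. if v = vx then a else b)"

definition tfun :: "('f, 'r, 'a) struc \<Rightarrow> ('f, 'a) trm \<Rightarrow> 'a \<Rightarrow> 'a \<Rightarrow> 'a" where
  "tfun M t a b = teval M (asg a b) t"

definition up :: "('f, 'r) lang \<Rightarrow> ('f, 'r, 'a) struc \<Rightarrow> 'a \<Rightarrow> 'a \<Rightarrow> ('f, 'r, 'a) fm set" where
  "up L M a b = {\<phi>. cformula L \<phi> \<and> sat M (asg a b) \<phi>}"

definition up2 :: "('f, 'r) lang \<Rightarrow> ('f, 'r, 'a) struc \<Rightarrow> 'a \<Rightarrow> 'a \<Rightarrow> 'a \<Rightarrow> 'a \<Rightarrow> ('f, 'r, 'a) fm set" where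
  "up2 L M a b c d = up L M a b \<inter> up L M c d"

definition triv :: "('f, 'r) lang \<Rightarrow> ('f, 'r, 'a) struc \<Rightarrow> ('f, 'r, 'a) fm set" where
  "triv L M = {\<phi>. cformula L \<phi> \<and> (\<forall>a b c d. \<phi> \<in> up2 L M a b c d)}"

definition arrow_models :: "('f, 'r) lang \<Rightarrow> ('f, 'r, 'a) struc \<Rightarrow> 'a \<Rightarrow> 'a \<Rightarrow> 'a \<Rightarrow> 'a \<Rightarrow> bool" where
  "arrow_models L M a b c d =
     (up L M a b \<union> up L M c d \<subseteq> triv L M \<or>
      ((\<exists>\<phi>\<in>up2 L M a b c d. \<phi> \<notin> triv L M) \<and>
       (\<forall>d'. triv L M \<subset> up2 L M a b c d \<and> up2 L M a b c d \<subseteq> up2 L M a b c d'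
              \<longrightarrow> triv L M \<subset> up2 L M a b c d' \<and> up2 L M a b c d' \<subseteq> up2 L M a b c d)))"

definition analogy :: "('f, 'r) lang \<Rightarrow> ('f, 'r, 'a) struc \<Rightarrow> 'a \<Rightarrow> 'a \<Rightarrow> 'a \<Rightarrow> 'a \<Rightarrow> bool" where
  "analogy L M a b c d =
     (arrow_models L M a b c d \<and> arrow_models L M b a d c \<and>
      arrow_models L M c d a b \<and> arrow_models L M d c b a)"

end

theory Submission
  imports Defs
begin

fun swp :: "('f, 'a) trm \<Rightarrow> ('f, 'a) trm" where
  "swp (Var v) = Var (if v = 0 then 1 else if v = 1 then 0 else v)"
| "swp (Par p) = Par p"
| "swp (Fn f ts) = Fn f (map swp ts)"

lemma swp_props:
  "wf_trm L (swp t) = wf_trm L t \<and> has_par (swp t) = has_par t \<and>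
   tvars (swp t) = (\<lambda>v. if v = 0 then 1 else if v = 1 then 0 else v) ` tvars t"
  by (induction t) (auto simp: image_UN)

lemma swp_eval: "tvars t \<subseteq> {0,1} \<Longrightarrow> teval M (asg a b) (swp t) = teval M (asg b a) t"
proof (induction t)
  case (Var v)
  then have "v = 0 \<or> v = 1" by simp
  then show ?case by (auto simp: asg_def vx_def)
next
  case (Par p)
  then show ?case by simp
next
  case (Fn f ts)
  have "\<And>s. s \<in> set ts \<Longrightarrow> teval M (asg a b) (swp s) = teval M (asg b a) s"
    using Fn.IH Fn.prems by fastforce
  then show ?case by (auto intro!: arg_cong[where f="fun_int M f"])
qed

lemma cterm_swp: "cterm L t \<Longrightarrow> cterm L (swp t)"
proof -
  assume h: "cterm L t"
  then have tv: "tvars t = {0, 1}" by (simp add: cterm_def vx_def vy_def)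
  have "tvars (swp t) = (\<lambda>v. if v = 0 then 1 else if v = 1 then 0 else v) ` {0, 1::nat}"
    using swp_props[of L t] tv by simp
  also have "\<dots> = {0, 1}" by auto
  finally show ?thesis using h swp_props[of L t] by (simp add: cterm_def vx_def vy_def)
qed

lemma tfun_swp: "cterm L t \<Longrightarrow> tfun M (swp t) a b = tfun M t b a"
proof -
  assume "cterm L t"
  then have "tvars t \<subseteq> {0, 1}" by (simp add: cterm_def vx_def vy_def)
  then show ?thesis unfolding tfun_def by (rule swp_eval)
qed

lemma cformula_eq: "cterm L t \<Longrightarrow> cformula L (Eq t (Par e))"
  by (auto simp: cterm_def cformula_def dep_connected_def dep_vertices_def dep_edges_def)

lemma sat_eq: "sat M (asg u v) (Eq t (Par e)) = (tfun M t u v = e)"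
  by (simp add: tfun_def)

lemma arrow_gen:
  assumes "cformula L \<phi>" "sat M (asg a b) \<phi>" "sat M (asg c d) \<phi>"
    and "\<forall>d'. sat M (asg c d') \<phi> \<longrightarrow> d' = d"
  shows "arrow_models L M a b c d"
proof (cases "\<forall>z. z = d")
  case True
  have e: "\<And>u v. asg u v = asg d d"
    unfolding asg_def using True by (intro ext) metis
  have e2: "\<And>u v u' v' \<psi>. sat M (asg u v) \<psi> \<Longrightarrow> sat M (asg u' v') \<psi>"
    by (metis e)
  have "up L M a b \<union> up L M c d \<subseteq> triv L M"
    unfolding up_def triv_def up2_def using e2 by blast
  then show ?thesis unfolding arrow_models_def by blast
next
  case False
  then obtain z where z: "z \<noteq> d" by blast
  have in2: "\<phi> \<in> up2 L M a b c d" unfolding up2_def up_def using assms(1-3) by blast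
  have nt: "\<phi> \<notin> triv L M"
  proof
    assume "\<phi> \<in> triv L M"
    then have "\<phi> \<in> up2 L M a b c z" unfolding triv_def by blast
    then have "sat M (asg c z) \<phi>" unfolding up2_def up_def by blast
    with assms(4) z show False by blast
  qed
  have "\<forall>d'. triv L M \<subset> up2 L M a b c d \<and> up2 L M a b c d \<subseteq> up2 L M a b c d'
              \<longrightarrow> triv L M \<subset> up2 L M a b c d' \<and> up2 L M a b c d' \<subseteq> up2 L M a b c d"
  proof (intro allI impI)
    fix d' assume h: "triv L M \<subset> up2 L M a b c d \<and> up2 L M a b c d \<subseteq> up2 L M a b c d'"
    then have "\<phi> \<in> up2 L M a b c d'" using in2 by blast
    then have "d' = d" using assms(4) unfolding up2_def up_def by blast
    then show "triv L M \<subset> up2 L M a b c d' \<and> up2 L M a b c d' \<subseteq> up2 L M a b c d"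
      using h by simp
  qed
  moreover have "\<exists>\<phi>\<in>up2 L M a b c d. \<phi> \<notin> triv L M" using in2 nt by blast
  ultimately show ?thesis unfolding arrow_models_def by (intro disjI2 conjI)
qed

lemma arrow_term:
  assumes "cterm L t" "tfun M t a b = tfun M t c d"
    "\<forall>d'. d' \<noteq> d \<longrightarrow> tfun M t a b \<noteq> tfun M t c d'"
  shows "arrow_models L M a b c d"
  apply (rule arrow_gen[where \<phi> = "Eq t (Par (tfun M t a b))"])
  using assms by (auto simp: cformula_eq tfun_def)

theorem theorem10:
  fixes L :: "('f, 'r) lang" and M :: "('f, 'r, 'a) struc" and a b c d :: 'a
  shows "(\<forall>t. cterm L t \<and> tfun M t a b = tfun M t c d \<and>
              (\<forall>d'. d' \<noteq> d \<longrightarrow> tfun M t a b \<noteq> tfun M t c d')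
            \<longrightarrow> arrow_models L M a b c d)
       \<and> (\<forall>ta tb tc td.
            cterm L ta \<and> cterm L tb \<and> cterm L tc \<and> cterm L td \<and>
            tfun M ta a b = tfun M ta c d \<and> (\<forall>a'. a' \<noteq> a \<longrightarrow> tfun M ta a' b \<noteq> tfun M ta c d) \<and>
            tfun M tb a b = tfun M tb c d \<and> (\<forall>b'. b' \<noteq> b \<longrightarrow> tfun M tb a b' \<noteq> tfun M tb c d) \<and>
            tfun M tc a b = tfun M tc c d \<and> (\<forall>c'. c' \<noteq> c \<longrightarrow> tfun M tc a b \<noteq> tfun M tc c' d) \<and>
            tfun M td a b = tfun M td c d \<and> (\<forall>d'. d' \<noteq> d \<longrightarrow> tfun M td a b \<noteq> tfun M td c d')
            \<longrightarrow> analogy L M a b c d)"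
proof (intro conjI allI impI)
  fix t assume "cterm L t \<and> tfun M t a b = tfun M t c d \<and>
              (\<forall>d'. d' \<noteq> d \<longrightarrow> tfun M t a b \<noteq> tfun M t c d')"
  then show "arrow_models L M a b c d" using arrow_term[of L t M a b c d] by blast
next
  fix ta tb tc td
  assume h: "cterm L ta \<and> cterm L tb \<and> cterm L tc \<and> cterm L td \<and>
            tfun M ta a b = tfun M ta c d \<and> (\<forall>a'. a' \<noteq> a \<longrightarrow> tfun M ta a' b \<noteq> tfun M ta c d) \<and>
            tfun M tb a b = tfun M tb c d \<and> (\<forall>b'. b' \<noteq> b \<longrightarrow> tfun M tb a b' \<noteq> tfun M tb c d) \<and>
            tfun M tc a b = tfun M tc c d \<and> (\<forall>c'. c' \<noteq> c \<longrightarrow> tfun M tc a b \<noteq> tfun M tc c' d) \<and>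
            tfun M td a b = tfun M td c d \<and> (\<forall>d'. d' \<noteq> d \<longrightarrow> tfun M td a b \<noteq> tfun M td c d')"
  have 1: "arrow_models L M a b c d" using h arrow_term[of L td M a b c d] by blast
  have 2: "arrow_models L M b a d c"
    using h by (intro arrow_term[of L "swp tc" M b a d c]) (auto simp: tfun_swp cterm_swp)
  have 3: "arrow_models L M c d a b"
    using h by (intro arrow_term[of L tb M c d a b]) auto
  have 4: "arrow_models L M d c b a"
    using h by (intro arrow_term[of L "swp ta" M d c b a]) (auto simp: tfun_swp cterm_swp)
  show "analogy L M a b c d" using 1 2 3 4 by (simp add: analogy_def)
qed

end
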